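(* Let $X$ be a real Hilbert space, let $U$ be a closed affine subspace of $X$ and $V$ a nonempty closed convex subset of $X$, let $T:=T_{U,V}$, $v:=P_{\overline{\operatorname{ran}}(\mathrm{Id}-T)}0$, and assume $v\in\operatorname{ran}(\mathrm{Id}-T)$. Then for every $x\in X$, $P_UT^nx-P_UT^{n+1}x\to0$.
   Context: $T_{U,V}:=\mathrm{Id}-P_U+P_V(2P_U-\mathrm{Id})$, the Douglas–Rachford operator for the normal cones of $U$ and $V$; $P_C$ denotes projection onto $C$. *)

theory Defs
  imports "HOL-Analysis.Analysis"
begin

text \<open>Metric projection onto C (the library's closest_point requires heine_borel,
  i.e. finite dimension, so we use the same definition for a general inner product space).\<close>
definition proj :: "'a::real_inner set \<Rightarrow> 'a \<Rightarrow> 'a" where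
  "proj C x = (SOME p. p \<in> C \<and> (\<forall>y\<in>C. dist x p \<le> dist x y))"

definition DR_op :: "'a::real_inner set \<Rightarrow> 'a set \<Rightarrow> 'a \<Rightarrow> 'a" where
  "DR_op U V x = x - proj U x + proj V (2 *\<^sub>R proj U x - x)"

end

theory Submission
  imports Defs
begin

lemma para:
  fixes s t x :: "'a::real_inner"
  shows "norm (s - t)^2 = 2*norm (x-s)^2 + 2*norm(x-t)^2 - 4*norm(x - (1/2)*\<^sub>R(s+t))^2"
  by (simp add: power2_norm_eq_inner inner_diff_left inner_diff_right inner_commute algebra_simps)

lemma proj_exists:
  fixes S :: "'a::{real_inner,complete_space} set"
  assumes cl: "closed S" and cv: "convex S" and ne: "S \<noteq> {}"
  shows "\<exists>p\<in>S. \<forall>y\<in>S. dist x p \<le> dist x y"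
proof -
  define d where "d = infdist x S"
  have d0: "0 \<le> d" unfolding d_def by (rule infdist_nonneg)
  have dle: "\<And>y. y \<in> S \<Longrightarrow> d \<le> dist x y" unfolding d_def by (rule infdist_le)
  have "\<forall>n. \<exists>s\<in>S. dist x s < d + 1/(real n+1)"
  proof
    fix n
    have bb: "bdd_below ((\<lambda>a. dist x a) ` S)" by (rule bdd_belowI[of _ 0]) auto
    have "(INF a\<in>S. dist x a) < d + 1/(real n+1)"
      using infdist_notempty[OF ne, of x] d_def by (simp add: add_pos_pos)
    then show "\<exists>s\<in>S. dist x s < d + 1/(real n+1)"
      using cINF_less_iff[OF ne bb] by blast
  qed
  then obtain s where sS: "\<And>n. s n \<in> S" and sd: "\<And>n. dist x (s n) < d + 1/(real n+1)"
    by metis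
  have sq: "norm (x - s n)^2 \<le> d^2 + (2*d+1)/(real n+1)" for n
  proof -
    have a: "norm (x - s n) < d + 1/(real n+1)" using sd[of n] by (simp add: dist_norm)
    have b: "norm (x - s n)^2 \<le> (d + 1/(real n+1))^2"
      using a by (intro power_mono) auto
    define r where "r = 1/(real n+1)"
    have r0: "0 \<le> r" "r \<le> 1" unfolding r_def by (auto simp: divide_simps)
    have "r^2 \<le> r" using r0 mult_left_le[of r r] by (simp add: power2_eq_square)
    hence "(d + r)^2 \<le> d^2 + (2*d+1)*r" by (simp add: power2_eq_square algebra_simps)
    moreover have "(2*d+1)*r = (2*d+1)/(real n+1)" unfolding r_def by simp
    ultimately show ?thesis using b unfolding r_def by linarith
  qed
  have cauchy: "Cauchy s"
  proof (rule CauchyI)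
    fix e :: real assume e: "e > 0"
    obtain M :: nat where M: "4*(2*d+1)/e^2 < real M" using reals_Archimedean2 by blast
    show "\<exists>M. \<forall>m\<ge>M. \<forall>n\<ge>M. norm (s m - s n) < e"
    proof (intro exI allI impI)
      fix m n assume mM: "M \<le> m" and nM: "M \<le> n"
      have mid: "d \<le> norm (x - (1/2)*\<^sub>R(s m + s n))"
      proof -
        have "(1/2)*\<^sub>R(s m + s n) = (1/2)*\<^sub>R s m + (1 - 1/2) *\<^sub>R s n" by (simp add: scaleR_add_right)
        also have "\<dots> \<in> S" using cv sS by (intro convexD) auto
        finally show ?thesis using dle by (simp add: dist_norm)
      qed
      have "d^2 \<le> norm (x - (1/2)*\<^sub>R(s m + s n))^2" using mid d0 by (intro power_mono) auto
      hence "norm (s m - s n)^2 \<le> 2*(d^2 + (2*d+1)/(real m+1)) + 2*(d^2 + (2*d+1)/(real n+1)) - 4*d^2"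
        using para[of "s m" "s n" x] sq[of m] sq[of n] by (smt (verit))
      also have "\<dots> = 2*(2*d+1)/(real m+1) + 2*(2*d+1)/(real n+1)" by (simp add: algebra_simps)
      also have "\<dots> \<le> 2*(2*d+1)/(real M+1) + 2*(2*d+1)/(real M+1)"
        using mM nM d0 by (intro add_mono divide_left_mono) auto
      also have "\<dots> = 4*(2*d+1)/(real M+1)" by simp
      also have "\<dots> < e^2"
      proof -
        have "4*(2*d+1) < e^2 * (real M + 1)" using M e
          by (simp add: field_simps) (smt (verit) mult_pos_pos zero_less_power)
        thus ?thesis by (simp add: divide_simps)
      qed
      finally have "norm (s m - s n)^2 < e^2" .
      thus "norm (s m - s n) < e" using e by (simp add: power_less_imp_less_base)
    qed
  qed
  then obtain p where lim: "s \<longlonglongrightarrow> p" using convergent_eq_Cauchy by blast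
  have pS: "p \<in> S" using closed_sequentially[OF cl] sS lim by blast
  have "dist x p \<le> d"
  proof (rule LIMSEQ_le[of "\<lambda>n. dist x (s n)" _ "\<lambda>n. d + 1/(real n+1)"])
    show "(\<lambda>n. dist x (s n)) \<longlonglongrightarrow> dist x p" by (intro tendsto_intros lim)
    show "(\<lambda>n. d + 1/(real n+1)) \<longlonglongrightarrow> d"
      using LIMSEQ_inverse_real_of_nat_add[of d]
      by (simp add: inverse_eq_divide add.commute)
    show "\<exists>N. \<forall>n\<ge>N. dist x (s n) \<le> d + 1/(real n+1)" using sd less_imp_le by blast
  qed
  thus ?thesis using pS dle by (meson order_trans)
qed

locale ccset =
  fixes S :: "'a::{real_inner,complete_space} set"
  assumes cl: "closed S" and cv: "convex S" and ne: "S \<noteq> {}"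
begin

lemma proj_in: "proj S x \<in> S" and proj_min: "y \<in> S \<Longrightarrow> dist x (proj S x) \<le> dist x y"
proof -
  have "\<exists>p. p \<in> S \<and> (\<forall>y\<in>S. dist x p \<le> dist x y)" using proj_exists[OF cl cv ne] by blast
  from someI_ex[OF this] show "proj S x \<in> S" "y \<in> S \<Longrightarrow> dist x (proj S x) \<le> dist x y"
    unfolding proj_def by auto
qed

lemma proj_var: assumes y: "y \<in> S" shows "inner (x - proj S x) (y - proj S x) \<le> 0"
proof (rule ccontr)
  define p where "p = proj S x"
  define c where "c = inner (x - p) (y - p)"
  define q where "q = norm (y - p)^2"
  assume "\<not> inner (x - proj S x) (y - proj S x) \<le> 0"
  hence c0: "c > 0" unfolding c_def p_def by simp
  have "y \<noteq> p" using c0 unfolding c_def by auto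
  hence q0: "q > 0" unfolding q_def by simp
  define t where "t = min 1 (c/q)"
  have t0: "0 < t" "t \<le> 1" "t * q \<le> c" using c0 q0 unfolding t_def
    by (auto simp: min_def field_simps)
  have zS: "(1 - t) *\<^sub>R p + t *\<^sub>R y \<in> S"
    using cv proj_in y t0 unfolding p_def by (intro convexD) auto
  have eq: "x - ((1 - t) *\<^sub>R p + t *\<^sub>R y) = (x - p) - t *\<^sub>R (y - p)"
    by (simp add: algebra_simps)
  have "norm ((x - p) - t *\<^sub>R (y - p))^2 = norm (x - p)^2 - 2*t*c + t^2 * q"
    unfolding c_def q_def
    by (simp only: power2_norm_eq_inner) (simp add: inner_diff_left inner_diff_right inner_commute algebra_simps power2_eq_square)
  also have "\<dots> < norm (x - p)^2"
  proof -
    have "t^2 * q \<le> t * c" using t0 mult_left_mono[OF t0(3), of t] by (simp add: power2_eq_square mult.assoc)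
    moreover have "t * c > 0" using t0 c0 by simp
    ultimately show ?thesis by linarith
  qed
  finally have "norm (x - ((1 - t) *\<^sub>R p + t *\<^sub>R y)) < norm (x - p)"
    using eq by (metis norm_ge_zero power_less_imp_less_base)
  moreover have "dist x p \<le> dist x ((1 - t) *\<^sub>R p + t *\<^sub>R y)"
    using proj_min[OF zS] unfolding p_def .
  ultimately show False by (simp add: dist_norm)
qed

lemma proj_unique:
  assumes "p \<in> S" "\<And>y. y \<in> S \<Longrightarrow> inner (x - p) (y - p) \<le> 0"
  shows "proj S x = p"
proof -
  define q where "q = proj S x"
  have "inner (x - p) (q - p) \<le> 0" using assms proj_in unfolding q_def by blast
  moreover have "inner (x - q) (p - q) \<le> 0" using proj_var[OF assms(1)] unfolding q_def .
  ultimately have "inner (q - p) (q - p) \<le> 0"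
    by (simp add: inner_diff_left inner_diff_right inner_commute algebra_simps)
  hence "inner (q - p) (q - p) = 0" using inner_ge_zero[of "q - p"] by linarith
  thus ?thesis unfolding q_def by simp
qed

lemma proj_self: "x \<in> S \<Longrightarrow> proj S x = x"
  by (rule proj_unique) auto

lemma proj_firm: "norm (proj S a - proj S b)^2 \<le> inner (a - b) (proj S a - proj S b)"
proof -
  have "inner (a - proj S a) (proj S b - proj S a) \<le> 0" by (rule proj_var[OF proj_in])
  moreover have "inner (b - proj S b) (proj S a - proj S b) \<le> 0" by (rule proj_var[OF proj_in])
  ultimately show ?thesis
    by (simp add: power2_norm_eq_inner inner_diff_left inner_diff_right inner_commute algebra_simps)
qed

lemma proj_nonexp: "norm (proj S a - proj S b) \<le> norm (a - b)"
proof -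
  have "norm (proj S a - proj S b)^2 \<le> norm (a - b) * norm (proj S a - proj S b)"
    using proj_firm[of a b] Cauchy_Schwarz_ineq2[of "a - b" "proj S a - proj S b"] by linarith
  hence "norm (proj S a - proj S b) * norm (proj S a - proj S b) \<le> norm (a - b) * norm (proj S a - proj S b)"
    by (simp add: power2_eq_square)
  thus ?thesis
    by (cases "norm (proj S a - proj S b) = 0") (auto simp: mult_le_cancel_right)
qed

end


lemma num_aux:
  fixes E D M e K lam :: real
  assumes E: "E \<ge> 0" and D: "D \<ge> 0" and M: "M \<ge> 0" and e: "e > 0"
    and K: "K = M*(1+D)+1" and lam: "lam = min 1 (e^2)/(2*K)"
    and h: "E^2 \<le> lam*((E+D)*M)"
  shows "E < e"
proof -
  have "M*(1+D) \<ge> 0" using M D by simp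
  hence K0: "K > 0" using K by linarith
  have l0: "lam \<ge> 0" using lam K0 e by simp
  have lK1: "lam*K \<le> 1/2" using lam K0 by (simp add: field_simps)
  have lK2: "lam*K \<le> e^2/2" using lam K0 by (simp add: field_simps)
  show ?thesis
  proof (cases "E \<ge> 1")
    case True
    have "1*D \<le> E*D" using True D by (intro mult_right_mono) auto
    hence "E + D \<le> E*(1+D)" by (simp add: algebra_simps)
    hence "(E+D)*M \<le> (E*(1+D))*M" using M by (intro mult_right_mono) auto
    hence "(E+D)*M \<le> E*((1+D)*M)" by (simp add: mult.assoc)
    also have "\<dots> \<le> E*K" using K E by (intro mult_left_mono) (auto simp: algebra_simps)
    finally have "lam*((E+D)*M) \<le> lam*(E*K)" using l0 by (intro mult_left_mono)
    also have "\<dots> = E*(lam*K)" by simp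
    also have "\<dots> \<le> E*(1/2)" using lK1 E by (intro mult_left_mono)
    finally have "E*E \<le> E*(1/2)" using h by (simp add: power2_eq_square)
    hence "E \<le> 1/2" using True by (simp add: mult_le_cancel_left)
    thus ?thesis using True by simp
  next
    case False
    have "(E+D)*M \<le> (1+D)*M" using False M by (intro mult_right_mono) auto
    also have "\<dots> \<le> K" using K by simp
    finally have "lam*((E+D)*M) \<le> lam*K" using l0 by (intro mult_left_mono)
    moreover have "e^2 > 0" using e by simp
    ultimately have "E^2 < e^2" using h lK2 by linarith
    thus ?thesis using e E by (simp add: power_less_imp_less_base)
  qed
qed

locale firm =
  fixes T :: "'a::{real_inner,complete_space} \<Rightarrow> 'a"
  assumes firm: "\<And>a b. norm (T a - T b)^2 + norm ((a - T a) - (b - T b))^2 \<le> norm (a - b)^2"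
begin

definition F where "F y = y - T y"

lemma nonexp: "norm (T a - T b) \<le> norm (a - b)"
proof -
  have "norm (T a - T b)^2 \<le> norm (a - b)^2" using firm[of a b] zero_le_power2[of "norm ((a - T a) - (b - T b))"] by linarith
  thus ?thesis by (rule power2_le_imp_le) auto
qed

lemma mono: "inner (F a - F b) (a - b) \<ge> 0"
proof -
  have e: "T a - T b = (a - b) - (F a - F b)" unfolding F_def by simp
  have "norm ((a - b) - (F a - F b))^2 + norm (F a - F b)^2 \<le> norm (a - b)^2"
    using firm[of a b] unfolding e F_def by simp
  hence "2 * norm (F a - F b)^2 \<le> 2 * inner (F a - F b) (a - b)"
    by (simp only: power2_norm_eq_inner) (simp add: inner_diff_left inner_diff_right inner_commute algebra_simps)
  thus ?thesis using zero_le_power2[of "norm (F a - F b)"] by linarith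
qed

lemma resolvent:
  assumes l: "l > 0"
  shows "\<exists>w. F w + l *\<^sub>R w = x"
proof -
  define g where "g w = (1/(1+l)) *\<^sub>R (x + T w)" for w
  have "\<exists>!w. g w = w"
  proof (rule banach_fix_type[of "1/(1+l)"])
    show "0 \<le> 1/(1+l)" "1/(1+l) < 1" using l by auto
    show "\<forall>a b. dist (g a) (g b) \<le> 1/(1+l) * dist a b"
    proof (intro allI)
      fix a b
      have "g a - g b = (1/(1+l)) *\<^sub>R (T a - T b)"
        unfolding g_def by (simp add: scaleR_add_right scaleR_diff_right)
      hence "dist (g a) (g b) = 1/(1+l) * norm (T a - T b)"
        unfolding dist_norm using l by simp
      also have "\<dots> \<le> 1/(1+l) * dist a b" using nonexp[of a b] l
        by (simp add: dist_norm divide_simps)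
      finally show "dist (g a) (g b) \<le> 1/(1+l) * dist a b" .
    qed
  qed
  then obtain w where "g w = w" by blast
  hence "(1+l) *\<^sub>R w = (1+l) *\<^sub>R g w" by simp
  also have "\<dots> = x + T w" unfolding g_def using l by simp
  finally have "(1+l) *\<^sub>R w = x + T w" .
  hence "F w + l *\<^sub>R w = x" unfolding F_def by (simp add: algebra_simps)
  thus ?thesis by blast
qed


lemma key:
  assumes l: "l > 0" and w: "F w + l *\<^sub>R w = x"
  shows "norm (x - F w)^2 \<le> inner (x - F u) (x - F w) - l * inner (F w - F u) u"
proof -
  define z where "z = F w"
  have lw: "l *\<^sub>R (w - u) = (x - z) - l *\<^sub>R u" using w unfolding z_def by (simp add: algebra_simps)
  have "0 \<le> l * inner (F w - F u) (w - u)" using mono[of w u] l by simp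
  also have "\<dots> = inner (z - F u) (l *\<^sub>R (w - u))" unfolding z_def by simp
  also have "\<dots> = inner (z - F u) (x - z) - l * inner (z - F u) u"
    unfolding lw by (simp add: inner_diff_right)
  also have "inner (z - F u) (x - z) = inner (x - F u) (x - z) - norm (x - z)^2"
    by (simp only: power2_norm_eq_inner) (simp add: inner_diff_left inner_diff_right inner_commute algebra_simps)
  finally show ?thesis unfolding z_def by simp
qed

lemma approx:
  assumes t: "0 \<le> t" "t \<le> 1" and x: "x = t *\<^sub>R F u1 + (1 - t) *\<^sub>R F u2" and e: "e > 0"
  shows "\<exists>z\<in>range F. dist z x < e"
proof -
  define M where "M = norm u1 + norm u2"
  define D where "D = norm (x - F u1) + norm (x - F u2)"
  define K where "K = M*(1+D)+1"
  define lam where "lam = min 1 (e^2)/(2*K)"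
  have "M*(1+D) \<ge> 0" unfolding M_def D_def by simp
  hence K0: "K > 0" unfolding K_def by linarith
  have l0: "lam > 0" unfolding lam_def using K0 e by simp
  obtain w where w: "F w + lam *\<^sub>R w = x" using resolvent[OF l0] by blast
  define z where "z = F w"
  define E where "E = norm (x - z)"
  have k1: "E^2 \<le> inner (x - F u1) (x - z) - lam * inner (z - F u1) u1"
    using key[OF l0 w, of u1] unfolding E_def z_def .
  have k2: "E^2 \<le> inner (x - F u2) (x - z) - lam * inner (z - F u2) u2"
    using key[OF l0 w, of u2] unfolding E_def z_def .
  have comb: "t * inner (x - F u1) (x - z) + (1 - t) * inner (x - F u2) (x - z) = 0"
  proof -
    have "t * inner (x - F u1) (x - z) + (1 - t) * inner (x - F u2) (x - z)
        = inner (t *\<^sub>R (x - F u1) + (1 - t) *\<^sub>R (x - F u2)) (x - z)"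
      by (simp add: inner_add_left)
    also have "t *\<^sub>R (x - F u1) + (1 - t) *\<^sub>R (x - F u2) = 0"
      using x by (simp add: algebra_simps)
    finally show ?thesis by simp
  qed
  have "E^2 = t * E^2 + (1 - t) * E^2" by (simp add: algebra_simps)
  also have "\<dots> \<le> t * (inner (x - F u1) (x - z) - lam * inner (z - F u1) u1)
      + (1 - t) * (inner (x - F u2) (x - z) - lam * inner (z - F u2) u2)"
    using k1 k2 t by (intro add_mono mult_left_mono) auto
  also have "\<dots> = lam * (t * (- inner (z - F u1) u1) + (1 - t) * (- inner (z - F u2) u2))"
    using comb by (simp add: algebra_simps)
  also have "\<dots> \<le> lam * ((E + D) * M)"
  proof (rule mult_left_mono)
    have a1: "- inner (z - F u1) u1 \<le> (E + norm (x - F u1)) * norm u1"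
    proof -
      have "- inner (z - F u1) u1 \<le> norm (z - F u1) * norm u1"
        using Cauchy_Schwarz_ineq2[of "z - F u1" u1] by simp
      also have "norm (z - F u1) \<le> E + norm (x - F u1)" unfolding E_def
        using norm_triangle_ineq[of "z - x" "x - F u1"] by (simp add: norm_minus_commute)
      hence "norm (z - F u1) * norm u1 \<le> (E + norm (x - F u1)) * norm u1" by (intro mult_right_mono) auto
      finally show ?thesis .
    qed
    have a2: "- inner (z - F u2) u2 \<le> (E + norm (x - F u2)) * norm u2"
    proof -
      have "- inner (z - F u2) u2 \<le> norm (z - F u2) * norm u2"
        using Cauchy_Schwarz_ineq2[of "z - F u2" u2] by simp
      also have "norm (z - F u2) \<le> E + norm (x - F u2)" unfolding E_def
        using norm_triangle_ineq[of "z - x" "x - F u2"] by (simp add: norm_minus_commute)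
      hence "norm (z - F u2) * norm u2 \<le> (E + norm (x - F u2)) * norm u2" by (intro mult_right_mono) auto
      finally show ?thesis .
    qed
    have b1: "(E + norm (x - F u1)) * norm u1 \<le> (E + D) * M"
      unfolding D_def M_def E_def by (intro mult_mono) auto
    have b2: "(E + norm (x - F u2)) * norm u2 \<le> (E + D) * M"
      unfolding D_def M_def E_def by (intro mult_mono) auto
    have "t * (- inner (z - F u1) u1) \<le> t * ((E + D) * M)"
      using a1 b1 t by (intro mult_left_mono) auto
    moreover have "(1 - t) * (- inner (z - F u2) u2) \<le> (1 - t) * ((E + D) * M)"
      using a2 b2 t by (intro mult_left_mono) auto
    ultimately show "t * (- inner (z - F u1) u1) + (1 - t) * (- inner (z - F u2) u2) \<le> (E + D) * M"
      by (simp add: algebra_simps)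
    show "0 \<le> lam" using l0 by simp
  qed
  finally have "E^2 \<le> lam * ((E + D) * M)" .
  hence "E < e" by (rule num_aux[OF _ _ _ e K_def lam_def, rotated 3])
     (auto simp: E_def D_def M_def)
  thus ?thesis unfolding E_def z_def by (auto simp: dist_norm norm_minus_commute)
qed


lemma closure_convex: "convex (closure (range F))"
proof (rule convexI)
  fix a b :: 'a and u v :: real
  assume a: "a \<in> closure (range F)" and b: "b \<in> closure (range F)"
    and u: "0 \<le> u" and v: "0 \<le> v" and uv: "u + v = 1"
  show "u *\<^sub>R a + v *\<^sub>R b \<in> closure (range F)"
    unfolding closure_approachable
  proof (intro allI impI)
    fix e :: real assume e: "e > 0"
    obtain a' where a': "a' \<in> range F" "dist a' a < e/3"
      using a e unfolding closure_approachable by (meson divide_pos_pos zero_less_numeral)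
    obtain b' where b': "b' \<in> range F" "dist b' b < e/3"
      using b e unfolding closure_approachable by (meson divide_pos_pos zero_less_numeral)
    obtain u1 u2 where u1: "a' = F u1" and u2: "b' = F u2" using a' b' by blast
    have x': "u *\<^sub>R a' + v *\<^sub>R b' = u *\<^sub>R F u1 + (1 - u) *\<^sub>R F u2"
    proof -
      have "v = 1 - u" using uv by simp
      thus ?thesis using u1 u2 by simp
    qed
    obtain z where z: "z \<in> range F" "dist z (u *\<^sub>R a' + v *\<^sub>R b') < e/3"
      using approx[OF u _ x'] uv v e by (smt (verit) divide_pos_pos zero_less_numeral)
    have "dist (u *\<^sub>R a' + v *\<^sub>R b') (u *\<^sub>R a + v *\<^sub>R b) = norm (u *\<^sub>R (a' - a) + v *\<^sub>R (b' - b))"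
      by (simp add: dist_norm algebra_simps)
    also have "\<dots> \<le> norm (u *\<^sub>R (a' - a)) + norm (v *\<^sub>R (b' - b))" by (rule norm_triangle_ineq)
    also have "\<dots> = u * dist a' a + v * dist b' b" using u v by (simp add: dist_norm)
    also have "\<dots> \<le> u * (e/3) + v * (e/3)"
      using a'(2) b'(2) u v by (intro add_mono mult_left_mono) auto
    also have "\<dots> = (u + v) * (e/3)" by (simp add: algebra_simps)
    also have "\<dots> = e/3" using uv by simp
    finally have "dist (u *\<^sub>R a' + v *\<^sub>R b') (u *\<^sub>R a + v *\<^sub>R b) \<le> e/3" .
    hence "dist z (u *\<^sub>R a + v *\<^sub>R b) < e"
      using z(2) dist_triangle[of z "u *\<^sub>R a + v *\<^sub>R b" "u *\<^sub>R a' + v *\<^sub>R b'"] e by linarith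
    thus "\<exists>y\<in>range F. dist y (u *\<^sub>R a + v *\<^sub>R b) < e" using z(1) by blast
  qed
qed


lemma shift:
  assumes min: "\<And>w. norm v \<le> norm (F w)" and z: "F z = v"
  shows "F (T z) = v"
proof -
  have "norm (T z - T (T z))^2 + norm ((z - T z) - (T z - T (T z)))^2 \<le> norm (z - T z)^2"
    by (rule firm)
  hence h: "norm (F (T z))^2 + norm (v - F (T z))^2 \<le> norm v^2"
    using z unfolding F_def by simp
  have "norm v^2 \<le> norm (F (T z))^2" using min[of "T z"] by (simp add: power_mono)
  hence "norm (v - F (T z))^2 \<le> 0" using h by linarith
  thus ?thesis by simp
qed

lemma orbit:
  assumes min: "\<And>w. norm v \<le> norm (F w)" and z: "F z = v"
  shows "F ((T^^n) z) = v"
  by (induction n) (auto simp: z shift[OF min])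

lemma conv:
  assumes min: "\<And>w. norm v \<le> norm (F w)" and y0: "F y0 = v"
  shows "(\<lambda>n. F ((T^^n) x)) \<longlonglongrightarrow> v"
proof -
  define c where "c k = norm (F ((T^^k) x) - v)^2" for k
  have step: "norm ((T^^Suc n) x - (T^^Suc n) y0)^2 + c n \<le> norm ((T^^n) x - (T^^n) y0)^2" for n
    using firm[of "(T^^n) x" "(T^^n) y0"] orbit[OF min y0, of n]
    unfolding c_def F_def by simp
  have bnd: "(\<Sum>k\<le>n. c k) + norm ((T^^Suc n) x - (T^^Suc n) y0)^2 \<le> norm (x - y0)^2" for n
  proof (induction n)
    case 0 show ?case using step[of 0] by simp
  next
    case (Suc n) show ?case using Suc step[of "Suc n"] by simp
  qed
  have "summable c"
  proof (rule bounded_imp_summable)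
    show "0 \<le> c n" for n unfolding c_def by simp
    show "(\<Sum>k\<le>n. c k) \<le> norm (x - y0)^2" for n using bnd[of n] zero_le_power2[of "norm ((T^^Suc n) x - (T^^Suc n) y0)"] by linarith
  qed
  hence "c \<longlonglongrightarrow> 0" by (rule summable_LIMSEQ_zero)
  hence "(\<lambda>n. sqrt (c n)) \<longlonglongrightarrow> 0" using tendsto_real_sqrt by fastforce
  hence "(\<lambda>n. norm (F ((T^^n) x) - v)) \<longlonglongrightarrow> 0" unfolding c_def by simp
  hence "(\<lambda>n. F ((T^^n) x) - v) \<longlonglongrightarrow> 0" by (simp add: tendsto_norm_zero_iff)
  thus ?thesis by (simp add: LIM_zero_iff)
qed

end

context ccset
begin

lemma refl_nonexp: "norm ((2 *\<^sub>R proj S a - a) - (2 *\<^sub>R proj S b - b)) \<le> norm (a - b)"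
proof -
  define w where "w = a - b"
  define p where "p = proj S a - proj S b"
  have pw: "norm p^2 \<le> inner w p" unfolding p_def w_def by (rule proj_firm)
  have e: "(2 *\<^sub>R proj S a - a) - (2 *\<^sub>R proj S b - b) = 2 *\<^sub>R p - w"
    unfolding p_def w_def by (simp add: algebra_simps)
  have "norm (2 *\<^sub>R p - w)^2 = 4 * norm p^2 - 4 * inner w p + norm w^2"
    by (simp only: power2_norm_eq_inner) (simp add: inner_diff_left inner_diff_right inner_commute algebra_simps)
  hence "norm (2 *\<^sub>R p - w)^2 \<le> norm w^2" using pw by linarith
  hence "norm (2 *\<^sub>R p - w) \<le> norm w" by (rule power2_le_imp_le) simp
  thus ?thesis unfolding e w_def .
qed

lemma min_unique:
  assumes p: "p \<in> S" and m: "\<And>y. y \<in> S \<Longrightarrow> dist x p \<le> dist x y"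
  shows "proj S x = p"
proof -
  define q where "q = proj S x"
  have v: "inner (x - q) (p - q) \<le> 0" unfolding q_def by (rule proj_var[OF p])
  have "norm (x - p) \<le> norm (x - q)" using m[OF proj_in] unfolding q_def by (simp add: dist_norm)
  hence le: "norm (x - p)^2 \<le> norm (x - q)^2" by (simp add: power_mono)
  have "norm (x - p)^2 = norm (x - q)^2 - 2 * inner (x - q) (p - q) + norm (p - q)^2"
  proof -
    have "x - p = (x - q) - (p - q)" by simp
    thus ?thesis
      by (simp only: power2_norm_eq_inner) (simp add: inner_diff_left inner_diff_right inner_commute algebra_simps)
  qed
  hence "norm (p - q)^2 \<le> 0" using le v by linarith
  thus ?thesis unfolding q_def by simp
qed

end

lemma half_sum: "(1/2::real) *\<^sub>R (a::'a::real_vector) + (1/2) *\<^sub>R a = a"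
proof -
  have "(1/2 + 1/2::real) *\<^sub>R a = a" by simp
  thus ?thesis by (simp only: scaleR_add_left)
qed

lemma half_sum2: "(1/2::real) *\<^sub>R (a::'a::real_vector) + ((1/2) *\<^sub>R a + b) = a + b"
  by (metis half_sum add.assoc)

locale affset = ccset +
  assumes aff: "affine S"
begin

lemma aff_comb: "a \<in> S \<Longrightarrow> b \<in> S \<Longrightarrow> u + v = 1 \<Longrightarrow> u *\<^sub>R a + v *\<^sub>R b \<in> S"
  using aff unfolding affine_def by blast

lemma orth: assumes u: "u \<in> S" shows "inner (x - proj S x) (u - proj S x) = 0"
proof -
  define p where "p = proj S x"
  have "2 *\<^sub>R p + (-1) *\<^sub>R u \<in> S" using aff_comb[OF _ u, of p 2 "-1"] proj_in unfolding p_def by simp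
  moreover have "2 *\<^sub>R p + (-1) *\<^sub>R u = p + (p - u)" by (simp add: algebra_simps scaleR_2)
  ultimately have "p + (p - u) \<in> S" by metis
  hence "inner (x - p) ((p + (p - u)) - p) \<le> 0" unfolding p_def by (rule proj_var)
  hence "inner (x - p) (p - u) \<le> 0" by simp
  hence "inner (x - p) (u - p) \<ge> 0" by (simp add: inner_diff_right)
  moreover have "inner (x - p) (u - p) \<le> 0" using proj_var[OF u] unfolding p_def .
  ultimately show ?thesis unfolding p_def by simp
qed

lemma orth_char:
  assumes p: "p \<in> S" and o: "\<And>u. u \<in> S \<Longrightarrow> inner (x - p) (u - p) = 0"
  shows "proj S x = p"
  using p o by (intro proj_unique) auto

lemma mid: "proj S ((1/2) *\<^sub>R (a + e)) = (1/2) *\<^sub>R (proj S a + proj S e)"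
proof (rule orth_char)
  define m where "m = (1/2) *\<^sub>R (proj S a + proj S e)"
  have mS: "m \<in> S" unfolding m_def using aff_comb[OF proj_in proj_in, of "1/2" "1/2" a e]
    by (simp add: scaleR_add_right)
  show "(1/2) *\<^sub>R (proj S a + proj S e) \<in> S" using mS unfolding m_def .
  fix u assume u: "u \<in> S"
  have h: "inner (y - proj S y) (u - m) = 0" for y
  proof -
    have "u - m = (u - proj S y) - (m - proj S y)" by simp
    thus ?thesis using orth[OF u, of y] orth[OF mS, of y] by (simp add: inner_diff_right)
  qed
  have "(1/2) *\<^sub>R (a + e) - m = (1/2) *\<^sub>R (a - proj S a) + (1/2) *\<^sub>R (e - proj S e)"
    unfolding m_def by (simp add: algebra_simps)
  hence "inner ((1/2) *\<^sub>R (a + e) - m) (u - m) = (1/2) * inner (a - proj S a) (u - m) + (1/2) * inner (e - proj S e) (u - m)"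
    by (simp add: inner_add_left)
  thus "inner ((1/2) *\<^sub>R (a + e) - (1/2) *\<^sub>R (proj S a + proj S e)) (u - (1/2) *\<^sub>R (proj S a + proj S e)) = 0"
    using h[of a] h[of e] unfolding m_def by simp
qed

lemma four: "norm ((proj S a - proj S b) - (proj S c - proj S e)) \<le> norm ((a - b) - (c - e))"
proof -
  have "proj S a + proj S e = 2 *\<^sub>R proj S ((1/2) *\<^sub>R (a + e))" by (simp add: mid)
  moreover have "proj S b + proj S c = 2 *\<^sub>R proj S ((1/2) *\<^sub>R (b + c))" by (simp add: mid)
  ultimately have "(proj S a - proj S b) - (proj S c - proj S e)
     = 2 *\<^sub>R (proj S ((1/2) *\<^sub>R (a + e)) - proj S ((1/2) *\<^sub>R (b + c)))"
    by (simp add: algebra_simps scaleR_2)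
  hence "norm ((proj S a - proj S b) - (proj S c - proj S e))
     = 2 * norm (proj S ((1/2) *\<^sub>R (a + e)) - proj S ((1/2) *\<^sub>R (b + c)))" by simp
  also have "\<dots> \<le> 2 * norm ((1/2) *\<^sub>R (a + e) - (1/2) *\<^sub>R (b + c))"
    using proj_nonexp by simp
  also have "\<dots> = norm ((a - b) - (c - e))"
  proof -
    have "(1/2) *\<^sub>R (a + e) - (1/2) *\<^sub>R (b + c) = (1/2) *\<^sub>R ((a - b) - (c - e))"
      by (simp add: algebra_simps)
    thus ?thesis by simp
  qed
  finally show ?thesis .
qed

end

lemma DR_firm:
  assumes U: "ccset U" and V: "ccset V"
  shows "firm (DR_op U V)"
proof
  fix a b :: 'a
  define RU where "RU z = 2 *\<^sub>R proj U z - z" for z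
  define N where "N z = 2 *\<^sub>R proj V (RU z) - RU z" for z
  have T: "DR_op U V z = (1/2) *\<^sub>R (z + N z)" for z
  proof -
    have "z + N z = 2 *\<^sub>R DR_op U V z" unfolding DR_op_def N_def RU_def by (simp add: algebra_simps scaleR_2)
    thus ?thesis by simp
  qed
  define w where "w = a - b"
  define n where "n = N a - N b"
  have nw: "norm n \<le> norm w"
  proof -
    have "norm n \<le> norm (RU a - RU b)" unfolding n_def N_def by (rule ccset.refl_nonexp[OF V])
    also have "\<dots> \<le> norm w" unfolding w_def RU_def by (rule ccset.refl_nonexp[OF U])
    finally show ?thesis .
  qed
  have e1: "DR_op U V a - DR_op U V b = (1/2) *\<^sub>R (w + n)" unfolding T w_def n_def by (simp add: algebra_simps half_sum half_sum2)
  have e2: "(a - DR_op U V a) - (b - DR_op U V b) = (1/2) *\<^sub>R (w - n)" unfolding T w_def n_def by (simp add: algebra_simps half_sum half_sum2)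
  have "norm ((1/2) *\<^sub>R (w + n))^2 + norm ((1/2) *\<^sub>R (w - n))^2 = (norm w^2 + norm n^2)/2"
    by (simp only: power2_norm_eq_inner) (simp add: inner_diff_left inner_diff_right inner_add_left inner_add_right inner_commute algebra_simps)
  also have "\<dots> \<le> norm w^2" using nw by (simp add: power_mono)
  finally show "norm (DR_op U V a - DR_op U V b)^2 + norm ((a - DR_op U V a) - (b - DR_op U V b))^2 \<le> norm (a - b)^2"
    unfolding e1 e2 w_def .
qed

theorem proposition4p6:
  fixes U V :: "'a::{real_inner, complete_space} set" and x :: 'a
  assumes "affine U" and "closed U" and "U \<noteq> {}"
    and "convex V" and "closed V" and "V \<noteq> {}"
    and "proj (closure (range (\<lambda>y. y - DR_op U V y))) 0
           \<in> range (\<lambda>y. y - DR_op U V y)"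
  shows "(\<lambda>n. proj U ((DR_op U V ^^ n) x)
              - proj U ((DR_op U V ^^ (Suc n)) x)) \<longlonglongrightarrow> 0"
proof -
  interpret U: affset U using assms(1-3) by unfold_locales (auto simp: affine_imp_convex)
  interpret V: ccset V using assms(4-6) by unfold_locales auto
  have Uc: "ccset U" "ccset V" by unfold_locales
  define T where "T = DR_op U V"
  interpret firm T unfolding T_def by (rule DR_firm[OF Uc])
  have Fe: "(\<lambda>y. y - DR_op U V y) = F"
    apply (unfold F_def[abs_def])
    apply (unfold T_def)
    by simp
  define C where "C = closure (range F)"
  interpret C: ccset C unfolding C_def by unfold_locales (auto simp: closure_convex)
  define v where "v = proj C 0"
  obtain y0 where y0: "F y0 = v" using assms(7) unfolding Fe C_def[symmetric] v_def by auto
  have min: "norm v \<le> norm (F w)" for w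
  proof -
    have "F w \<in> C" unfolding C_def by (simp add: closure_subset[THEN subsetD])
    thus ?thesis using C.proj_min[of "F w" 0] unfolding v_def by simp
  qed
  have lim: "(\<lambda>n. F ((T^^n) x)) \<longlonglongrightarrow> v" by (rule conv[OF min y0])
  define p0 where "p0 = proj U y0"
  define q0 where "q0 = proj V (2 *\<^sub>R p0 - y0)"
  have "v = y0 - T y0" using y0 by (simp add: F_def)
  hence vpq: "v = p0 - q0" unfolding T_def DR_op_def p0_def q0_def by (simp add: algebra_simps)
  have p0U: "p0 \<in> U" unfolding p0_def by (rule U.proj_in)
  have q0V: "q0 \<in> V" unfolding q0_def by (rule V.proj_in)
  define c where "c = proj U q0"
  have cU: "c \<in> U" unfolding c_def by (rule U.proj_in)
  define z where "z = 2 *\<^sub>R c - q0"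
  have Pz: "proj U z = c"
  proof (rule U.orth_char[OF cU])
    fix u assume u: "u \<in> U"
    have zc: "z - c = c - q0" unfolding z_def by (simp add: algebra_simps scaleR_2)
    have o: "inner (q0 - c) (u - c) = 0" using U.orth[OF u, of q0] unfolding c_def .
    have "inner (c - q0) (u - c) = - inner (q0 - c) (u - c)" by (simp add: inner_diff_left)
    thus "inner (z - c) (u - c) = 0" unfolding zc using o by simp
  qed
  have Fz: "F z = c - q0"
  proof -
    have "2 *\<^sub>R c - z = q0" unfolding z_def by (simp add: scaleR_2)
    hence "T z = z - c + q0" unfolding T_def DR_op_def Pz using V.proj_self[OF q0V] by simp
    thus ?thesis unfolding F_def by simp
  qed
  have "norm (p0 - q0) \<le> norm (c - q0)" using min[of z] unfolding Fz vpq .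
  hence d1: "dist q0 p0 \<le> dist q0 c" by (simp add: dist_norm norm_minus_commute)
  have "proj U q0 = p0"
  proof (rule U.min_unique[OF p0U])
    fix u assume "u \<in> U"
    thus "dist q0 p0 \<le> dist q0 u" using d1 U.proj_min[of u q0] unfolding c_def by linarith
  qed
  hence cp: "c = p0" unfolding c_def .
  have Pc: "proj U c = c" using U.proj_self[OF cU] .
  have bound: "norm (proj U ((T^^n) x) - proj U ((T^^Suc n) x)) \<le> norm (F ((T^^n) x) - v)" for n
  proof -
    have "norm ((proj U ((T^^n) x) - proj U ((T^^Suc n) x)) - (proj U c - proj U q0))
       \<le> norm (((T^^n) x - (T^^Suc n) x) - (c - q0))" by (rule U.four)
    moreover have "proj U c - proj U q0 = 0" using Pc unfolding c_def[symmetric] by simp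
    moreover have "((T^^n) x - (T^^Suc n) x) - (c - q0) = F ((T^^n) x) - v"
      unfolding F_def vpq cp by simp
    ultimately show ?thesis by simp
  qed
  have "(\<lambda>n. F ((T^^n) x) - v) \<longlonglongrightarrow> 0" using lim by (simp add: LIM_zero_iff)
  hence "(\<lambda>n. norm (F ((T^^n) x) - v)) \<longlonglongrightarrow> 0" by (simp add: tendsto_norm_zero_iff)
  hence "(\<lambda>n. proj U ((T^^n) x) - proj U ((T^^Suc n) x)) \<longlonglongrightarrow> 0"
    by (rule Lim_null_comparison[rotated]) (intro always_eventually allI bound)
  thus ?thesis unfolding T_def .
qed

end
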